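(* Suppose the second-order condition of the context holds with $\gamma_0>-1/2$ and the intermediate sequence $(k_n)$ satisfies $\Phi(k_n/n)=O(k_n^{-1/2})$. Let $W$, $Q_n$, $\tilde a$, $\tilde\Phi$ be as in the context, let $W_n(t)=k_n^{-1/2}W(k_nt)$ (a standard Brownian motion) and $$Y_n(t)=k_n^{1/2}\Big(\frac{Q_n(t)-Q_n(1)}{\tilde a(k_n/n)}-\frac{t^{-\gamma_0}-1}{\gamma_0}\Big).$$ Then for every $\varepsilon>0$, as $n\to\infty$, $$\sup_{0<t\le1}t^{\gamma_0+1/2+\varepsilon}\Big|Y_n(t)-\Big(W_n(1)-t^{-(\gamma_0+1)}W_n(t)+k_n^{1/2}\tilde\Phi\Big(\frac{k_n}{n}\Big)\Psi(t)\Big)\Big|=o_p(1).$$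
   Context: Let $X_1,X_2,\dots$ be i.i.d. with distribution function $F$, $F^{\leftarrow}$ its generalized inverse, $X_{1,n}\le\dots\le X_{n,n}$ the order statistics; $(k_n)$ is intermediate: $k_n\to\infty$, $k_n/n\to0$. Throughout, $(t^{-\gamma_0}-1)/\gamma_0$ is read as $-\log t$ when $\gamma_0=0$. Second-order condition: there exist $\gamma_0>-1/2$ and measurable, locally bounded $a,\Phi:(0,1)\to(0,\infty)$, $\Psi:(0,\infty)\to\mathbb R$ with $\lim_{t\downarrow0}\big[(F^{\leftarrow}(1-tx)-F^{\leftarrow}(1-t))/a(t)-(x^{-\gamma_0}-1)/\gamma_0\big]/\Phi(t)=\Psi(x)$ for all $x>0$, $x\mapsto\Psi(x)/(x^{-\gamma_0}-1)$ not constant, $\Phi$ eventually not changing sign, $\Phi(t)\to0$ as $t\downarrow0$. Construction (available under these assumptions): on a suitable probability space there are a standard Brownian motion $W$ and processes $Q_n$ such that for each $n$, $(Q_n(t))_{t\in[0,1]}$ has the same distribution as $(X_{n-[k_nt],n})_{t\in[0,1]}$, and there are functions with $\tilde a(k_n/n)=a(k_n/n)(1+o(\Phi(k_n/n)))$ and $\tilde\Phi(k_n/n)\sim\Phi(k_n/n)$ such that for all $\varepsilon>0$ $$\sup_{t\in(0,1]}t^{\gamma_0+1/2+\varepsilon}\Big|\frac{Q_n(t)-F^{\leftarrow}(1-k_n/n)}{\tilde a(k_n/n)}-\Big(\frac{t^{-\gamma_0}-1}{\gamma_0}-t^{-(\gamma_0+1)}\frac{W(k_nt)}{k_n}+\tilde\Phi\Big(\frac{k_n}{n}\Big)\Psi(t)\Big)\Big|=o_p(k_n^{-1/2})+o_p\Big(\tilde\Phi\Big(\frac{k_n}{n}\Big)\Big).$$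 *)

theory Defs
  imports "HOL-Probability.Probability" "HOL-Library.Landau_Symbols"
begin

definition hfun :: "real \<Rightarrow> real \<Rightarrow> real" where
  "hfun g x = (if g = 0 then - ln x else (x powr (- g) - 1) / g)"

definition geninv :: "(real \<Rightarrow> real) \<Rightarrow> real \<Rightarrow> real" where
  "geninv F p = Inf {x. p \<le> F x}"

definition ostat :: "(nat \<Rightarrow> 'b \<Rightarrow> real) \<Rightarrow> nat \<Rightarrow> nat \<Rightarrow> 'b \<Rightarrow> real" where
  "ostat X j n \<omega> = sort (map (\<lambda>i. X i \<omega>) [1..<Suc n]) ! (j - 1)"

definition brownian_motion :: "'a measure \<Rightarrow> (real \<Rightarrow> 'a \<Rightarrow> real) \<Rightarrow> bool" where
  "brownian_motion M W \<longleftrightarrow>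
     prob_space M \<and>
     (\<forall>t\<ge>0. W t \<in> borel_measurable M) \<and>
     (AE \<omega> in M. W 0 \<omega> = 0 \<and> continuous_on {0..} (\<lambda>t. W t \<omega>)) \<and>
     (\<forall>s t. 0 \<le> s \<longrightarrow> s < t \<longrightarrow>
        distributed M lborel (\<lambda>\<omega>. W t \<omega> - W s \<omega>)
          (\<lambda>x. ennreal (normal_density 0 (sqrt (t - s)) x))) \<and>
     (\<forall>(ts :: nat \<Rightarrow> real) m. 0 \<le> ts 0 \<and> (\<forall>i<m. ts i \<le> ts (Suc i)) \<longrightarrow>
        prob_space.indep_vars M (\<lambda>_. borel) (\<lambda>i \<omega>. W (ts (Suc i)) \<omega> - W (ts i) \<omega>) {..<m})"

text \<open>Outer probability (no measurability needed).\<close>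
definition outer_prob :: "'a measure \<Rightarrow> 'a set \<Rightarrow> real" where
  "outer_prob M A = (INF B\<in>{B\<in>sets M. A \<inter> space M \<subseteq> B}. measure M B)"

definition sup_oP :: "'a measure \<Rightarrow> (real \<Rightarrow> real) \<Rightarrow> (nat \<Rightarrow> real \<Rightarrow> 'a \<Rightarrow> real)
    \<Rightarrow> (nat \<Rightarrow> real) \<Rightarrow> bool" where
  "sup_oP M w D r \<longleftrightarrow>
     (\<forall>\<delta>>0. (\<lambda>n. outer_prob M {\<omega>\<in>space M. \<exists>t\<in>{0<..1}. \<delta> * r n < w t * \<bar>D n t \<omega>\<bar>})
               \<longlonglongrightarrow> 0)"

end

theory Submission
  imports Defs
begin

lemma outer_prob_nonneg: "0 \<le> outer_prob M A"
  unfolding outer_prob_def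
  by (rule cINF_greatest) (auto intro: exI[of _ "space M"])

lemma outer_prob_mono: "A \<subseteq> B \<Longrightarrow> outer_prob M A \<le> outer_prob M B"
  unfolding outer_prob_def
  apply (rule cINF_superset_mono)
     apply (auto intro!: bdd_belowI[of _ 0])
  done

lemma hfun_1: "hfun g 1 = 0"
  by (simp add: hfun_def)

lemma key0:
  fixes s vq vq1 vA vh vp vwt vw1 vf vP vc :: real
  shows "s * ((vq - vq1)/vA - vh) - (vw1 / s - vp * (vwt / s) + s * vf * vP)
     = s * (((vq - vc)/vA - (vh - vp* vwt/(s* s) + vf* vP)) - ((vq1 - vc)/vA - (0 - 1* vw1/(s* s) + vf*0)))"
proof -
  have e1: "(vq - vq1)/vA = (vq-vc)/vA - (vq1-vc)/vA" by (simp add: diff_divide_distrib)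
  have sd: "s * (x / (s * s)) = x / s" for x
    by (cases "s = 0") (simp_all add: field_simps)
  have "s * (((vq - vc)/vA - (vh - vp* vwt/(s* s) + vf* vP)) - ((vq1 - vc)/vA - (0 - 1* vw1/(s* s) + vf*0)))
     = s * ((vq - vq1)/vA - vh) + s * (vp* vwt/(s* s)) - s * (vw1/(s* s)) - s * vf * vP"
    unfolding e1 by (simp add: algebra_simps)
  also have "\<dots> = s * ((vq - vq1)/vA - vh) - (vw1 / s - vp * (vwt / s) + s * vf * vP)"
    unfolding sd by simp
  finally show ?thesis by simp
qed
lemma key_identity:
  fixes K vq vq1 vA vh vp vwt vw1 vf vP vc vh1 vp1 vP1 vw1' :: real
  assumes "K \<ge> 0" "vh1 = 0" "vp1 = 1" "vP1 = 0" "vw1' = vw1"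
  shows "sqrt K * ((vq - vq1)/vA - vh) - (vw1 / sqrt K - vp * (vwt / sqrt K) + sqrt K * vf * vP)
     = sqrt K * (((vq - vc)/vA - (vh - vp* vwt/K + vf* vP)) - ((vq1 - vc)/vA - (vh1 - vp1* vw1'/K + vf* vP1)))"
proof -
  have "sqrt K * sqrt K = K" using assms(1) by simp
  then show ?thesis using key0[of "sqrt K" vq vq1 vA vh vw1 vp vwt vf vP vc] assms(2-5) by simp
qed

theorem lemma3p1:
  fixes N :: "'b measure" and X :: "nat \<Rightarrow> 'b \<Rightarrow> real" and F :: "real \<Rightarrow> real"
    and k :: "nat \<Rightarrow> nat" and \<gamma> :: real
    and a \<Phi> :: "real \<Rightarrow> real" and \<Psi> :: "real \<Rightarrow> real"
    and M :: "'a measure" and W :: "real \<Rightarrow> 'a \<Rightarrow> real" and Q :: "nat \<Rightarrow> real \<Rightarrow> 'a \<Rightarrow> real"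
    and a\<^sub>t \<Phi>\<^sub>t :: "real \<Rightarrow> real"
  assumes
    \<comment> \<open>X_1, X_2, ... i.i.d. with distribution function F\<close>
    N: "prob_space N"
    and X_rv: "\<And>i. X i \<in> borel_measurable N"
    and X_indep: "prob_space.indep_vars N (\<lambda>_. borel) X {1..}"
    and X_F: "\<And>i x. i \<ge> 1 \<Longrightarrow> measure N {\<omega>\<in>space N. X i \<omega> \<le> x} = F x"
    \<comment> \<open>intermediate sequence\<close>
    and k_inf: "filterlim k at_top sequentially"
    and k_n: "(\<lambda>n. real (k n) / real n) \<longlonglongrightarrow> 0"
    \<comment> \<open>second-order condition\<close>
    and \<gamma>: "\<gamma> > - 1 / 2"
    and a_pos: "\<And>t. t \<in> {0<..<1} \<Longrightarrow> a t > 0"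
    and \<Phi>_pos: "\<And>t. t \<in> {0<..<1} \<Longrightarrow> \<Phi> t > 0"
    and a_meas: "a \<in> borel_measurable (restrict_space borel {0<..<1})"
    and \<Phi>_meas: "\<Phi> \<in> borel_measurable (restrict_space borel {0<..<1})"
    and a_lb: "\<And>K. compact K \<Longrightarrow> K \<subseteq> {0<..<1} \<Longrightarrow> bounded (a ` K)"
    and \<Phi>_lb: "\<And>K. compact K \<Longrightarrow> K \<subseteq> {0<..<1} \<Longrightarrow> bounded (\<Phi> ` K)"
    and SO: "\<And>x. x > 0 \<Longrightarrow>
      ((\<lambda>t. ((geninv F (1 - t * x) - geninv F (1 - t)) / a t - hfun \<gamma> x) / \<Phi> t)
         \<longlongrightarrow> \<Psi> x) (at_right 0)"
    and \<Psi>_nc: "\<not> (\<exists>c. \<forall>x. x > 0 \<longrightarrow> x \<noteq> 1 \<longrightarrow> \<Psi> x / hfun \<gamma> x = c)"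
    and \<Phi>_sign: "eventually (\<lambda>t. \<Phi> t \<ge> 0) (at_right 0) \<or> eventually (\<lambda>t. \<Phi> t \<le> 0) (at_right 0)"
    and \<Phi>_0: "(\<Phi> \<longlongrightarrow> 0) (at_right 0)"
    \<comment> \<open>rate condition\<close>
    and \<Phi>_O: "(\<lambda>n. \<Phi> (real (k n) / real n)) \<in> O(\<lambda>n. 1 / sqrt (real (k n)))"
    \<comment> \<open>the construction\<close>
    and BM: "brownian_motion M W"
    and Q_distr: "\<And>n. distr M (Pi\<^sub>M {0..1} (\<lambda>_. borel)) (\<lambda>\<omega>. \<lambda>t\<in>{0..1}. Q n t \<omega>)
                 = distr N (Pi\<^sub>M {0..1} (\<lambda>_. borel))
                     (\<lambda>\<omega>. \<lambda>t\<in>{0..1}. ostat X (n - nat \<lfloor>real (k n) * t\<rfloor>) n \<omega>)"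
    and a\<^sub>t_a: "(\<lambda>n. (a\<^sub>t (real (k n) / real n) / a (real (k n) / real n) - 1)
                      / \<Phi> (real (k n) / real n)) \<longlonglongrightarrow> 0"
    and \<Phi>\<^sub>t_\<Phi>: "(\<lambda>n. \<Phi>\<^sub>t (real (k n) / real n) / \<Phi> (real (k n) / real n)) \<longlonglongrightarrow> 1"
    and approx: "\<And>\<epsilon>. \<epsilon> > 0 \<Longrightarrow> sup_oP M (\<lambda>t. t powr (\<gamma> + 1 / 2 + \<epsilon>))
       (\<lambda>n t \<omega>. (Q n t \<omega> - geninv F (1 - real (k n) / real n)) / a\<^sub>t (real (k n) / real n)
           - (hfun \<gamma> t - t powr (- (\<gamma> + 1)) * W (real (k n) * t) \<omega> / real (k n)
              + \<Phi>\<^sub>t (real (k n) / real n) * \<Psi> t))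
       (\<lambda>n. 1 / sqrt (real (k n)) + \<bar>\<Phi>\<^sub>t (real (k n) / real n)\<bar>)"
  shows "\<And>\<epsilon>. \<epsilon> > 0 \<Longrightarrow> sup_oP M (\<lambda>t. t powr (\<gamma> + 1 / 2 + \<epsilon>))
       (\<lambda>n t \<omega>.
          sqrt (real (k n)) * ((Q n t \<omega> - Q n 1 \<omega>) / a\<^sub>t (real (k n) / real n) - hfun \<gamma> t)
          - (W (real (k n)) \<omega> / sqrt (real (k n))
             - t powr (- (\<gamma> + 1)) * (W (real (k n) * t) \<omega> / sqrt (real (k n)))
             + sqrt (real (k n)) * \<Phi>\<^sub>t (real (k n) / real n) * \<Psi> t))
       (\<lambda>n. 1)"
proof -
  fix \<epsilon> :: real assume \<epsilon>: "\<epsilon> > 0"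
  define w where "w t = t powr (\<gamma> + 1 / 2 + \<epsilon>)" for t :: real
  define D where "D = (\<lambda>n t \<omega>. (Q n t \<omega> - geninv F (1 - real (k n) / real n)) / a\<^sub>t (real (k n) / real n)
           - (hfun \<gamma> t - t powr (- (\<gamma> + 1)) * W (real (k n) * t) \<omega> / real (k n)
              + \<Phi>\<^sub>t (real (k n) / real n) * \<Psi> t))"
  define r where "r n = 1 / sqrt (real (k n)) + \<bar>\<Phi>\<^sub>t (real (k n) / real n)\<bar>" for n
  have ap: "\<And>\<delta>. \<delta> > 0 \<Longrightarrow> (\<lambda>n. outer_prob M {\<omega>\<in>space M. \<exists>t\<in>{0<..1}. \<delta> * r n < w t * \<bar>D n t \<omega>\<bar>}) \<longlonglongrightarrow> 0"
    using approx[OF \<epsilon>] unfolding sup_oP_def w_def D_def r_def by blast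
  have \<Psi>1: "\<Psi> 1 = 0"
  proof -
    have "((\<lambda>t. ((geninv F (1 - t * 1) - geninv F (1 - t)) / a t - hfun \<gamma> 1) / \<Phi> t) \<longlongrightarrow> \<Psi> 1) (at_right 0)"
      using SO[of 1] by simp
    moreover have "((\<lambda>t. ((geninv F (1 - t * 1) - geninv F (1 - t)) / a t - hfun \<gamma> 1) / \<Phi> t) \<longlongrightarrow> 0) (at_right (0::real))"
      by (simp add: hfun_1)
    ultimately show ?thesis using tendsto_unique[OF trivial_limit_at_right_real] by blast
  qed
  have w_le1: "w t \<le> 1" if "t \<in> {0<..1}" for t
    using that \<gamma> \<epsilon> unfolding w_def by (auto intro!: powr_le1)
  have w1: "w 1 = 1" by (simp add: w_def)
  have w_nn: "w t \<ge> 0" for t by (simp add: w_def)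
  obtain c where c: "c > 0" "eventually (\<lambda>n. norm (\<Phi> (real (k n) / real n)) \<le> c * norm (1 / sqrt (real (k n)))) sequentially"
    by (rule landau_o.bigE[OF \<Phi>_O]) blast
  have ev2: "eventually (\<lambda>n. \<bar>\<Phi>\<^sub>t (real (k n) / real n) / \<Phi> (real (k n) / real n) - 1\<bar> < 1/2) sequentially"
    using \<Phi>\<^sub>t_\<Phi>[unfolded tendsto_iff, rule_format, of "1/2"] by (simp add: dist_real_def)
  have evk: "eventually (\<lambda>n. k n > 0) sequentially"
    using filterlim_iff[THEN iffD1, OF k_inf, rule_format, OF eventually_gt_at_top[of 0]] by simp
  define C where "C = 1 + 2 * c"
  have C: "C > 0" using c by (simp add: C_def)
  have evC: "eventually (\<lambda>n. k n > 0 \<and> sqrt (real (k n)) * r n \<le> C) sequentially"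
    using c(2) ev2 evk
  proof eventually_elim
    case (elim n)
    define p where "p = \<Phi> (real (k n) / real n)"
    define pt where "pt = \<Phi>\<^sub>t (real (k n) / real n)"
    have kp: "sqrt (real (k n)) > 0" using elim by simp
    have p0: "p \<noteq> 0" using elim(2) unfolding p_def by auto
    have "\<bar>pt / p\<bar> \<le> 2" using elim(2) unfolding p_def pt_def by linarith
    then have "\<bar>pt\<bar> \<le> 2 * \<bar>p\<bar>" using p0 by (simp add: abs_divide divide_le_eq)
    moreover have "\<bar>p\<bar> \<le> c / sqrt (real (k n))" using elim(1) unfolding p_def by simp
    ultimately have "\<bar>pt\<bar> \<le> 2 * c / sqrt (real (k n))" by simp
    then have "sqrt (real (k n)) * \<bar>pt\<bar> \<le> 2 * c" using kp by (simp add: le_divide_eq mult.commute)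
    then show ?case using kp elim(3) unfolding r_def pt_def C_def by (simp add: distrib_left)
  qed
  show "sup_oP M (\<lambda>t. t powr (\<gamma> + 1 / 2 + \<epsilon>))
       (\<lambda>n t \<omega>.
          sqrt (real (k n)) * ((Q n t \<omega> - Q n 1 \<omega>) / a\<^sub>t (real (k n) / real n) - hfun \<gamma> t)
          - (W (real (k n)) \<omega> / sqrt (real (k n))
             - t powr (- (\<gamma> + 1)) * (W (real (k n) * t) \<omega> / sqrt (real (k n)))
             + sqrt (real (k n)) * \<Phi>\<^sub>t (real (k n) / real n) * \<Psi> t))
       (\<lambda>n. 1)"
    unfolding sup_oP_def w_def[symmetric]
  proof (intro allI impI)
    fix \<delta> :: real assume \<delta>: "\<delta> > 0"
    define \<delta>' where "\<delta>' = \<delta> / (2 * C)"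
    have \<delta>': "\<delta>' > 0" using \<delta> C by (simp add: \<delta>'_def)
    have lim: "(\<lambda>n. outer_prob M {\<omega>\<in>space M. \<exists>t\<in>{0<..1}. \<delta>' * r n < w t * \<bar>D n t \<omega>\<bar>}) \<longlonglongrightarrow> 0"
      using ap[OF \<delta>'] .
    let ?S = "\<lambda>n. {\<omega> \<in> space M. \<exists>t\<in>{0<..1}. \<delta> * 1 < w t * \<bar>sqrt (real (k n)) * ((Q n t \<omega> - Q n 1 \<omega>) / a\<^sub>t (real (k n) / real n) - hfun \<gamma> t)
          - (W (real (k n)) \<omega> / sqrt (real (k n))
             - t powr (- (\<gamma> + 1)) * (W (real (k n) * t) \<omega> / sqrt (real (k n)))
             + sqrt (real (k n)) * \<Phi>\<^sub>t (real (k n) / real n) * \<Psi> t)\<bar>}"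
    have sub: "eventually (\<lambda>n. ?S n \<subseteq> {\<omega>\<in>space M. \<exists>t\<in>{0<..1}. \<delta>' * r n < w t * \<bar>D n t \<omega>\<bar>}) sequentially"
      using evC
    proof eventually_elim
      case (elim n)
      show ?case
      proof (rule subsetI)
        fix \<omega> assume "\<omega> \<in> ?S n"
        then obtain t where \<omega>: "\<omega> \<in> space M" and t: "t \<in> {0<..1}" and big:
          "\<delta> * 1 < w t * \<bar>sqrt (real (k n)) * ((Q n t \<omega> - Q n 1 \<omega>) / a\<^sub>t (real (k n) / real n) - hfun \<gamma> t)
          - (W (real (k n)) \<omega> / sqrt (real (k n))
             - t powr (- (\<gamma> + 1)) * (W (real (k n) * t) \<omega> / sqrt (real (k n)))
             + sqrt (real (k n)) * \<Phi>\<^sub>t (real (k n) / real n) * \<Psi> t)\<bar>" by blast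
        have eq: "sqrt (real (k n)) * ((Q n t \<omega> - Q n 1 \<omega>) / a\<^sub>t (real (k n) / real n) - hfun \<gamma> t)
          - (W (real (k n)) \<omega> / sqrt (real (k n))
             - t powr (- (\<gamma> + 1)) * (W (real (k n) * t) \<omega> / sqrt (real (k n)))
             + sqrt (real (k n)) * \<Phi>\<^sub>t (real (k n) / real n) * \<Psi> t) = sqrt (real (k n)) * (D n t \<omega> - D n 1 \<omega>)"
          unfolding D_def by (rule key_identity) (simp_all add: \<Psi>1 hfun_1)
        show "\<omega> \<in> {\<omega>\<in>space M. \<exists>t\<in>{0<..1}. \<delta>' * r n < w t * \<bar>D n t \<omega>\<bar>}"
        proof (rule ccontr)
          assume "\<not> ?thesis"
          then have le: "\<And>s. s \<in> {0<..1} \<Longrightarrow> w s * \<bar>D n s \<omega>\<bar> \<le> \<delta>' * r n" using \<omega> by (auto simp: not_less)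
          have le1: "\<bar>D n 1 \<omega>\<bar> \<le> \<delta>' * r n" using le[of 1] w1 by simp
          have sk: "sqrt (real (k n)) \<ge> 0" by simp
          have "w t * \<bar>sqrt (real (k n)) * (D n t \<omega> - D n 1 \<omega>)\<bar> = sqrt (real (k n)) * (w t * \<bar>D n t \<omega> - D n 1 \<omega>\<bar>)"
            using w_nn by (simp add: abs_mult)
          also have "\<dots> \<le> sqrt (real (k n)) * (w t * \<bar>D n t \<omega>\<bar> + \<bar>D n 1 \<omega>\<bar>)"
          proof (rule mult_left_mono[OF _ sk])
            have "w t * \<bar>D n t \<omega> - D n 1 \<omega>\<bar> \<le> w t * \<bar>D n t \<omega>\<bar> + w t * \<bar>D n 1 \<omega>\<bar>"
              using mult_left_mono[OF abs_triangle_ineq4 w_nn[of t]] by (simp add: distrib_left)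
            also have "w t * \<bar>D n 1 \<omega>\<bar> \<le> \<bar>D n 1 \<omega>\<bar>" using w_le1[OF t] w_nn[of t]
              by (simp add: mult_left_le_one_le)
            finally show "w t * \<bar>D n t \<omega> - D n 1 \<omega>\<bar> \<le> w t * \<bar>D n t \<omega>\<bar> + \<bar>D n 1 \<omega>\<bar>" by simp
          qed
          also have "\<dots> \<le> sqrt (real (k n)) * (2 * (\<delta>' * r n))"
            using le[OF t] le1 sk by (intro mult_left_mono) auto
          also have "\<dots> = 2 * \<delta>' * (sqrt (real (k n)) * r n)" by simp
          also have "\<dots> \<le> 2 * \<delta>' * C" using elim \<delta>' by (intro mult_left_mono) auto
          also have "\<dots> = \<delta>" using C by (simp add: \<delta>'_def)
          finally show False using big[unfolded eq] by linarith
        qed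
      qed
    qed
    show "(\<lambda>n. outer_prob M (?S n)) \<longlonglongrightarrow> 0"
    proof (rule tendsto_sandwich[OF _ _ tendsto_const lim])
      show "\<forall>\<^sub>F n in sequentially. 0 \<le> outer_prob M (?S n)" by (simp add: outer_prob_nonneg)
      show "\<forall>\<^sub>F n in sequentially. outer_prob M (?S n) \<le> outer_prob M {\<omega>\<in>space M. \<exists>t\<in>{0<..1}. \<delta>' * r n < w t * \<bar>D n t \<omega>\<bar>}"
        using sub by eventually_elim (rule outer_prob_mono)
    qed
  qed
qed

end
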